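(* Let $G$ be a random graph from the $G(N,p)$ model conditioned on being connected, with $p\le 1/2$. Then with probability at least $1/3$, $G$ has at least $p\binom{N}{2}$ edges.
   Context: $G(N,p)$ is the random graph on $N$ labeled vertices in which each of the $\binom N2$ possible edges is present independently with probability $p$. *)

theory Defs
  imports Complex_Main
begin

text \<open>Simple graphs on the labelled vertex set {0..<N}, represented by their edge sets:
  an edge is a 2-element set {i,j} with i < j < N.\<close>

definition all_edges :: "nat \<Rightarrow> nat set set" where
  "all_edges N = {e. \<exists>i j. i < j \<and> j < N \<and> e = {i, j}}"

definition graphs :: "nat \<Rightarrow> nat set set set" where
  "graphs N = Pow (all_edges N)"

definition connected_graph :: "nat \<Rightarrow> nat set set \<Rightarrow> bool" where
  "connected_graph N S \<longleftrightarrow>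
     (\<forall>u<N. \<forall>v<N. (u, v) \<in> {(x, y). {x, y} \<in> S}\<^sup>*)"

text \<open>Probability of the outcome S in G(N,p): each of the N choose 2 edges present
  independently with probability p.\<close>

definition gnp_prob :: "nat \<Rightarrow> real \<Rightarrow> nat set set \<Rightarrow> real" where
  "gnp_prob N p S = p ^ card S * (1 - p) ^ (card (all_edges N) - card S)"

definition gnp_event :: "nat \<Rightarrow> real \<Rightarrow> nat set set set \<Rightarrow> real" where
  "gnp_event N p A = (\<Sum>S\<in>A \<inter> graphs N. gnp_prob N p S)"

definition gnp_cond :: "nat \<Rightarrow> real \<Rightarrow> nat set set set \<Rightarrow> nat set set set \<Rightarrow> real" where
  "gnp_cond N p A B = gnp_event N p (A \<inter> B) / gnp_event N p B"

end

theory Submission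
  imports Defs
begin


lemma all_edges_eq: "all_edges N = {B. B \<subseteq> {0..<N} \<and> card B = 2}"
proof -
  have "e \<in> all_edges N \<longleftrightarrow> e \<subseteq> {0..<N} \<and> card e = 2" for e
  proof
    assume "e \<in> all_edges N" then show "e \<subseteq> {0..<N} \<and> card e = 2"
      unfolding all_edges_def by auto
  next
    assume a: "e \<subseteq> {0..<N} \<and> card e = 2"
    then obtain x y where xy: "e = {x,y}" "x \<noteq> y" by (auto simp: card_2_iff)
    show "e \<in> all_edges N"
    proof (cases "x < y")
      case True then show ?thesis using a xy unfolding all_edges_def by auto
    next
      case False then have "y < x" using xy by auto
      then show ?thesis using a xy unfolding all_edges_def by (auto simp: insert_commute)
    qed
  qed
  then show ?thesis by auto
qed

lemma card_all_edges: "card (all_edges N) = N choose 2"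
  unfolding all_edges_eq by (simp add: n_subsets)

lemma finite_all_edges: "finite (all_edges N)"
  unfolding all_edges_eq by (rule finite_subset[of _ "Pow {0..<N}"]) auto

lemma finite_edge_sets: "S \<subseteq> all_edges N \<Longrightarrow> finite S"
  using finite_all_edges finite_subset by blast

lemma connected_mono: "connected_graph N S \<Longrightarrow> S \<subseteq> T \<Longrightarrow> connected_graph N T"
proof -
  assume c: "connected_graph N S" and st: "S \<subseteq> T"
  have "{(x, y). {x, y} \<in> S} \<subseteq> {(x, y). {x, y} \<in> T}" using st by auto
  then have "{(x, y). {x, y} \<in> S}\<^sup>* \<subseteq> {(x, y). {x, y} \<in> T}\<^sup>*" by (rule rtrancl_mono)
  then show ?thesis using c unfolding connected_graph_def by blast
qed

lemma connected_full: "connected_graph N (all_edges N)"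
  unfolding connected_graph_def
proof (intro allI impI)
  fix u v assume u: "u < N" and v: "v < N"
  show "(u, v) \<in> {(x, y). {x, y} \<in> all_edges N}\<^sup>*"
  proof (cases "u = v")
    case True then show ?thesis by simp
  next
    case False
    have "{u, v} \<in> all_edges N"
    proof (cases "u < v")
      case True then show ?thesis using v unfolding all_edges_def by auto
    next
      case False then have "v < u" using \<open>u \<noteq> v\<close> by auto
      then show ?thesis using u unfolding all_edges_def by (auto simp: insert_commute)
    qed
    then show ?thesis by auto
  qed
qed

lemma connected_card:
  assumes c: "connected_graph N S" and sub: "S \<subseteq> all_edges N"
  shows "N - 1 \<le> card S"
proof (cases "N = 0")
  case True then show ?thesis by simp
next
  case False
  define R where "R = {(x, y). {x, y} \<in> S}"
  have reach: "\<exists>n. (v, 0) \<in> R ^^ n" if "v < N" for v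
    using c that False unfolding connected_graph_def R_def by (auto simp: rtrancl_power)
  define d where "d v = (LEAST n. (v, 0) \<in> R ^^ n)" for v
  have dR: "(v, 0) \<in> R ^^ d v" if "v < N" for v
    unfolding d_def using reach[OF that] by (rule LeastI_ex)
  have dmin: "d v \<le> n" if "(v, 0) \<in> R ^^ n" for v n
    unfolding d_def using that by (rule Least_le)
  have ex: "\<exists>w. (v, w) \<in> R \<and> (w, 0) \<in> R ^^ (d v - 1) \<and> d w = d v - 1"
    if v: "0 < v" "v < N" for v
  proof -
    have "d v \<noteq> 0" using dR[OF v(2)] v(1) by (cases "d v = 0") auto
    then obtain m where m: "d v = Suc m" by (cases "d v") auto
    then obtain w where w: "(v, w) \<in> R" "(w, 0) \<in> R ^^ m"
      using dR[OF v(2)] relpow_Suc_D2 by metis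
    have "d w \<le> m" using dmin w(2) by blast
    moreover have "\<not> d w < m"
    proof
      assume "d w < m"
      have "(w, 0) \<in> R ^^ d w" unfolding d_def using w(2) by (rule LeastI)
      then have "(v, 0) \<in> R ^^ Suc (d w)" by (rule relpow_Suc_I2[OF w(1)])
      then have "d v \<le> Suc (d w)" by (rule dmin)
      then show False using m \<open>d w < m\<close> by simp
    qed
    ultimately show ?thesis using w m by auto
  qed
  define g where "g v = {v, SOME w. (v, w) \<in> R \<and> (w, 0) \<in> R ^^ (d v - 1) \<and> d w = d v - 1}" for v
  have gprop: "g v \<in> S \<and> (\<exists>w. g v = {v, w} \<and> d w = d v - 1) \<and> d v \<noteq> 0" if v: "0 < v" "v < N" for v
  proof -
    let ?w = "SOME w. (v, w) \<in> R \<and> (w, 0) \<in> R ^^ (d v - 1) \<and> d w = d v - 1"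
    have w: "(v, ?w) \<in> R \<and> (?w, 0) \<in> R ^^ (d v - 1) \<and> d ?w = d v - 1"
      using ex[OF v] by (rule someI_ex)
    have "d v \<noteq> 0" using dR[OF v(2)] v(1) by (cases "d v = 0") auto
    then show ?thesis using w unfolding g_def R_def by auto
  qed
  have inj: "inj_on g {1..<N}"
  proof (rule inj_onI)
    fix v v' assume v: "v \<in> {1..<N}" and v': "v' \<in> {1..<N}" and eq: "g v = g v'"
    show "v = v'"
    proof (rule ccontr)
      assume ne: "v \<noteq> v'"
      have v0: "0 < v" "v < N" "0 < v'" "v' < N" using v v' by auto
      obtain w where w: "g v = {v, w}" "d w = d v - 1" "d v \<noteq> 0" using gprop[OF v0(1,2)] by blast
      obtain w' where w': "g v' = {v', w'}" "d w' = d v' - 1" "d v' \<noteq> 0" using gprop[OF v0(3,4)] by blast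
      have "{v, w} = {v', w'}" using eq w(1) w'(1) by simp
      then have "v = w'" "v' = w" using ne by (auto simp: doubleton_eq_iff)
      then show False using w w' by simp
    qed
  qed
  have "g ` {1..<N} \<subseteq> S"
  proof
    fix e assume "e \<in> g ` {1..<N}"
    then obtain v where "v \<in> {1..<N}" "e = g v" by blast
    then show "e \<in> S" using gprop[of v] by simp
  qed
  then have "card {1..<N} \<le> card S"
    using card_inj_on_le[OF inj _ finite_edge_sets[OF sub]] by blast
  then show ?thesis by simp
qed



definition Ck :: "nat \<Rightarrow> nat \<Rightarrow> nat set set set" where
  "Ck N k = {S. S \<subseteq> all_edges N \<and> connected_graph N S \<and> card S = k}"

lemma finite_Ck: "finite (Ck N k)"
  unfolding Ck_def by (rule finite_subset[of _ "Pow (all_edges N)"]) (auto simp: finite_all_edges)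

lemma Ck_mono:
  assumes k: "k < card (all_edges N)"
  shows "card (Ck N k) * (card (all_edges N) - k) \<le> card (Ck N (Suc k)) * Suc k"
proof -
  define E where "E = all_edges N"
  define P where "P = Sigma (Ck N k) (\<lambda>S. E - S)"
  define Q where "Q = Sigma (Ck N (Suc k)) (\<lambda>H. H)"
  have fE: "finite E" unfolding E_def by (rule finite_all_edges)
  have "card P = (\<Sum>S\<in>Ck N k. card (E - S))"
    unfolding P_def using finite_Ck fE by (simp add: card_SigmaI)
  also have "\<dots> = (\<Sum>S\<in>Ck N k. card E - k)"
  proof (rule sum.cong)
    fix S assume "S \<in> Ck N k"
    then have "S \<subseteq> E" "card S = k" unfolding Ck_def E_def by auto
    then show "card (E - S) = card E - k" using fE by (simp add: card_Diff_subset finite_subset)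
  qed simp
  finally have cP: "card P = card (Ck N k) * (card E - k)" by simp
  have "card Q = (\<Sum>H\<in>Ck N (Suc k). card H)"
    unfolding Q_def
  proof (rule card_SigmaI)
    show "finite (Ck N (Suc k))" by (rule finite_Ck)
    show "\<forall>a\<in>Ck N (Suc k). finite a" by (auto simp: Ck_def finite_edge_sets)
  qed
  also have "\<dots> = (\<Sum>H\<in>Ck N (Suc k). Suc k)"
    by (rule sum.cong) (auto simp: Ck_def)
  finally have cQ: "card Q = card (Ck N (Suc k)) * Suc k" by simp
  define f where "f = (\<lambda>(S::nat set set, e::nat set). (insert e S, e))"
  have inj: "inj_on f P"
  proof (rule inj_onI)
    fix a b assume a: "a \<in> P" and b: "b \<in> P" and eq: "f a = f b"
    obtain S e where ae: "a = (S, e)" by (cases a)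
    obtain S' e' where be: "b = (S', e')" by (cases b)
    have "e \<notin> S" "e' \<notin> S'" using a b ae be unfolding P_def by auto
    moreover have "insert e S = insert e' S'" "e = e'" using eq ae be unfolding f_def by auto
    ultimately have "S = S'" by (metis Diff_insert_absorb)
    then show "a = b" using ae be \<open>e = e'\<close> by simp
  qed
  have img: "f ` P \<subseteq> Q"
  proof
    fix y assume "y \<in> f ` P"
    then obtain S e where Se: "(S, e) \<in> P" "y = (insert e S, e)" unfolding f_def by auto
    then have S: "S \<subseteq> E" "connected_graph N S" "card S = k" "e \<in> E" "e \<notin> S"
      unfolding P_def Ck_def E_def by auto
    have "connected_graph N (insert e S)" using connected_mono[OF S(2)] by blast
    moreover have "card (insert e S) = Suc k" using S fE finite_subset by fastforce
    ultimately show "y \<in> Q" using Se S unfolding Q_def Ck_def E_def by auto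
  qed
  have fQ: "finite Q" unfolding Q_def using finite_Ck
    by (auto intro!: finite_SigmaI simp: Ck_def finite_edge_sets)
  have "card P \<le> card Q" using card_inj_on_le[OF inj img fQ] .
  then show ?thesis using cP cQ unfolding E_def by simp
qed

lemma Ck_small: "k < N - 1 \<Longrightarrow> Ck N k = {}"
  unfolding Ck_def using connected_card by fastforce

lemma Ck_full: "all_edges N \<in> Ck N (card (all_edges N))"
  unfolding Ck_def using connected_full by auto



lemma key_ineq:
  fixes m a b p :: real
  assumes p0: "0 < p" and ph: "p \<le> 1/2" and ab: "a + 1 \<le> b" and a0: "0 \<le> a"
    and bm: "b \<le> m" and c: "a + b + 1 \<le> 2*(m+1)*p"
  shows "(a+1)*b*((1-p)*(1-p)) \<le> (m-a)*(m-b+1)*(p*p)"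
proof -
  define cc where "cc = (a+b)/2"
  define w where "w = (b-a-1)/2"
  define A where "A = (m - cc + 1/2)*p"
  define B where "B = (cc + 1/2)*(1-p)"
  have B0: "0 \<le> B" unfolding B_def cc_def using a0 ab ph by simp
  have "A - B = (2*(m+1)*p - (a+b+1))/2" unfolding A_def B_def cc_def by (simp add: field_simps)
  moreover have "0 \<le> (2*(m+1)*p - (a+b+1))/2" using c by simp
  ultimately have AB: "B \<le> A" by linarith
  have AB2: "B*B \<le> A*A" using mult_mono[OF AB AB] B0 AB by simp
  have w2: "0 \<le> w*w" by simp
  have pp: "p*p \<le> (1-p)*(1-p)" using p0 ph by (intro mult_mono) auto
  have e1: "(a+1)*b*((1-p)*(1-p)) = B*B - (w*w)*((1-p)*(1-p))"
    unfolding B_def w_def cc_def by (simp add: field_simps power2_eq_square)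
  have e2: "(m-a)*(m-b+1)*(p*p) = A*A - (w*w)*(p*p)"
    unfolding A_def w_def cc_def by (simp add: field_simps power2_eq_square)
  have "(w*w)*(p*p) \<le> (w*w)*((1-p)*(1-p))" using mult_left_mono[OF pp w2] .
  then show ?thesis using e1 e2 AB2 by linarith
qed

lemma ratio_const:
  fixes x y T T0 j :: real
  assumes h: "x*(T-1-j) \<le> y*(T+j)" and x0: "0 \<le> x" and T: "T0 \<le> T" and j: "j+1 \<le> T0" "0 \<le> j"
  shows "x*((T0-1-j)/(T0+j)) \<le> y"
proof -
  have q: "(T0-1-j)/(T0+j) \<le> (T-1-j)/(T+j)"
  proof -
    have "(T0-1-j)*(T+j) \<le> (T-1-j)*(T0+j)"
    proof -
      have "(T-1-j)*(T0+j) - (T0-1-j)*(T+j) = (T - T0)*(2*j+1)" by (simp add: algebra_simps)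
      moreover have "0 \<le> (T - T0)*(2*j+1)" using T j by simp
      ultimately show ?thesis by linarith
    qed
    then show ?thesis using T j by (simp add: divide_simps)
  qed
  have "x*((T0-1-j)/(T0+j)) \<le> x*((T-1-j)/(T+j))" using mult_left_mono[OF q x0] .
  also have "\<dots> = x*(T-1-j)/(T+j)" by simp
  also have "\<dots> \<le> y" using h T j by (simp add: divide_simps)
  finally show ?thesis .
qed

context
  fixes F :: "nat \<Rightarrow> real" and M :: nat and p :: real
  assumes p0: "0 < p" and ph: "p \<le> 1/2"
    and Fnn: "\<And>k. 0 \<le> F k"
    and rat: "\<And>k. k < M \<Longrightarrow> F k * (real (M - k) * p) \<le> F (Suc k) * (real (Suc k) * (1 - p))"
begin

lemma pair_le:
  "a + n \<le> M \<Longrightarrow> real (2*a + n + 1) \<le> 2*(real M+1)*p \<Longrightarrow> F a \<le> F (a+n)"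
proof (induction n arbitrary: a rule: less_induct)
  case (less n)
  show ?case
  proof (cases n)
    case 0 then show ?thesis by simp
  next
    case (Suc n1)
    note n1 = Suc
    show ?thesis
    proof (cases n1)
      case 0
      have am: "a < M" using less.prems n1 0 by simp
      have r: "F a * (real (M - a) * p) \<le> F (Suc a) * (real (Suc a) * (1 - p))" using rat[OF am] .
      have "real (Suc a) * (1-p) \<le> real (M - a) * p"
        using less.prems(2) n1 0 am by (simp add: of_nat_diff algebra_simps)
      then have "F a * (real (Suc a) * (1-p)) \<le> F a * (real (M - a) * p)"
        using Fnn by (intro mult_left_mono) auto
      then have "F a * (real (Suc a) * (1-p)) \<le> F (Suc a) * (real (Suc a) * (1 - p))"
        using r by linarith
      moreover have "0 < real (Suc a) * (1-p)" using ph by simp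
      ultimately have "F a \<le> F (Suc a)" by (simp add: mult_le_cancel_right)
      then show ?thesis using n1 0 by simp
    next
      case (Suc n2)
      define b where "b = a + n"
      have nn: "n = Suc (Suc n2)" using n1 Suc by simp
      have IH: "F (Suc a) \<le> F (Suc a + n2)"
        using less.IH[of n2 "Suc a"] less.prems nn by (simp add: algebra_simps)
      have am: "a < M" and bm: "b \<le> M" using less.prems nn b_def by auto
      have b1: "b - 1 < M" "Suc (b - 1) = b" "Suc a + n2 = b - 1" using bm nn b_def by auto
      have r1: "F a * (real (M - a) * p) \<le> F (Suc a) * (real (Suc a) * (1 - p))" using rat[OF am] .
      have r2: "F (b-1) * (real (M - (b-1)) * p) \<le> F b * (real b * (1 - p))"
        using rat[OF b1(1)] b1(2) by simp
      have k: "(real a+1)*real b*((1-p)*(1-p)) \<le> (real M - real a)*(real M-real b+1)*(p*p)"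
        using key_ineq[OF p0 ph, of "real a" "real b" "real M"] less.prems nn b_def by auto
      have e1: "real (M - a) = real M - real a" using am by simp
      have e2: "real (M - (b-1)) = real M - real b + 1" using bm b1 by (simp add: of_nat_diff)
      define u1 where "u1 = real (M - a) * p"
      define u2 where "u2 = real (M - (b-1)) * p"
      define v1 where "v1 = real (Suc a) * (1 - p)"
      define v2 where "v2 = real b * (1 - p)"
      have u2p: "0 \<le> u2" "0 \<le> v1" unfolding u2_def v1_def using p0 ph by auto
      have X: "F a * u1 * u2 \<le> F (Suc a) * v1 * u2"
        using mult_right_mono[OF r1 u2p(1)] unfolding u1_def v1_def .
      have Y: "F (Suc a) * u2 \<le> F (b-1) * u2" using mult_right_mono[OF IH u2p(1)] b1 by simp
      have Y2: "F (Suc a) * v1 * u2 \<le> F (b-1) * u2 * v1"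
        using mult_right_mono[OF Y u2p(2)] by (simp add: algebra_simps)
      have Z: "F (b-1) * u2 * v1 \<le> F b * v2 * v1"
        using mult_right_mono[OF r2 u2p(2)] unfolding u2_def v2_def .
      have kk: "v1 * v2 \<le> u1 * u2"
        using k e1 e2 unfolding u1_def u2_def v1_def v2_def by (simp add: algebra_simps)
      have W: "F a * (v1 * v2) \<le> F a * (u1 * u2)"
        using mult_left_mono[OF kk Fnn] .
      have "F a * (u1 * u2) \<le> F b * (v1 * v2)"
        using X Y2 Z by (simp add: algebra_simps)
      then have "F a * ((real a+1)*real b*((1-p)*(1-p))) \<le> F b * ((real a+1)*real b*((1-p)*(1-p)))"
        using W unfolding v1_def v2_def by (simp add: algebra_simps)
      moreover have "0 < (real a+1)*real b*((1-p)*(1-p))" using ph nn b_def by simp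
      ultimately have "F a \<le> F b" by (simp add: mult_le_cancel_right)
      then show ?thesis using b_def by simp
    qed
  qed
qed

lemma step_ratio:
  assumes tx: "real t - 1 < real M * p" and i: "t + j \<le> M" and jt: "j + 1 \<le> t"
  shows "F (t-1+j) * (real t - 1 - real j) \<le> F (t+j) * (real t + real j)"
proof -
  define k where "k = t - 1 + j"
  have k: "k < M" "Suc k = t + j" using i jt k_def by auto
  have "real (M - k) * p = real M * p - real k * p" using k by (simp add: of_nat_diff algebra_simps)
  also have "real k = real t - 1 + real j" using jt k_def by (simp add: of_nat_diff)
  finally have e: "real (M - k) * p = real M * p - (real t - 1 + real j) * p" .
  have "real j * p \<le> real j * (1 - p)" using ph by (intro mult_left_mono) auto
  then have c: "(real t - 1 - real j) * (1-p) \<le> real (M - k) * p"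
    using e tx by (simp add: algebra_simps)
  have "F k * ((real t - 1 - real j) * (1-p)) \<le> F k * (real (M - k) * p)"
    using mult_left_mono[OF c Fnn] .
  also have "\<dots> \<le> F (Suc k) * (real (Suc k) * (1 - p))" using rat[OF k(1)] .
  finally have "F k * (real t - 1 - real j) * (1-p) \<le> F (t+j) * (real t + real j) * (1 - p)"
    using k by (simp add: algebra_simps)
  then show ?thesis using ph k_def by (simp add: mult_le_cancel_right)
qed

lemma sum_first:
  assumes "t + n \<le> M + 1"
  shows "(\<Sum>j<n. F (t+j)) \<le> sum F {t..M}"
proof -
  have "(\<Sum>j<n. F (t+j)) = sum F ((\<lambda>j. t+j) ` {..<n})"
    by (simp add: sum.reindex inj_on_def)
  also have "\<dots> \<le> sum F {t..M}"
    using assms by (intro sum_mono2) (auto simp: Fnn)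
  finally show ?thesis .
qed

lemma main_ineq:
  fixes s t :: nat
  assumes Fz: "\<And>k. k < s \<Longrightarrow> F k = 0"
    and tx: "real t - 1 < real M * p"
    and st: "s < t" and t5: "5 \<le> t"
    and t8: "s + 3 \<le> t \<Longrightarrow> 8 \<le> t"
    and t9: "s + 4 \<le> t \<Longrightarrow> 9 \<le> t"
    and tM: "t + 5 \<le> M" and t2M: "2*t \<le> M + 1"
  shows "sum F {..<t} \<le> 2 * sum F {t..M}"
proof -
  define u where "u = t - 2"
  have u: "t = Suc (Suc u)" using t5 u_def by simp
  have lo: "sum F {..<t} = sum F {..<u} + F u + F (Suc u)" using u by simp
  have pc: "real (2*a + n + 1) \<le> 2*(real M+1)*p" if "2*a + n + 1 = 2*t - 2" for a n
  proof -
    have "real (2*a+n+1) = 2 * real t - 2" using that t5 by (simp add: of_nat_diff)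
    also have "\<dots> \<le> 2*(real M+1)*p" using tx p0 by (simp add: algebra_simps)
    finally show ?thesis .
  qed
  have Fu: "F u \<le> F (Suc u)" using pair_le[of u 1] pc[of u 1] u tM by simp
  have tt: "F (Suc u) = F (t - 1)" using u by simp
  have rj: "F (t-1+j) * (real t - 1 - real j) \<le> F (t+j) * (real t + real j)" if "j \<le> 5" "j + 1 \<le> t" for j
    using step_ratio[OF tx, of j] that tM by simp
  have up6: "(\<Sum>j<6. F (t+j)) \<le> sum F {t..M}" using sum_first[of t 6] tM by simp
  have up2: "F t + F (t+1) \<le> sum F {t..M}" using sum_first[of t 2] tM by (simp add: numeral_eq_Suc)
  have rc: "F (t-1+j) * ((T0 - 1 - real j)/(T0 + real j)) \<le> F (t+j)"
    if "j \<le> 5" "T0 \<le> real t" "real j + 1 \<le> T0" for j T0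
  proof -
    have "j + 1 \<le> t" using that(2,3) by linarith
    then show ?thesis using ratio_const[OF rj[OF that(1)] Fnn that(2) that(3)] by simp
  qed
  show ?thesis
  proof (cases "t \<le> s + 2")
    case True
    have "sum F {..<u} = 0" using Fz True u by (intro sum.neutral) auto
    moreover have a0: "F (t-1) * (4/5) \<le> F t" using rc[of 0 5] t5 by simp
    moreover have a1: "F t * (1/2) \<le> F (t+1)" using rc[of 1 5] t5 by simp
    ultimately show ?thesis using lo Fu tt up2 Fnn[of t] by (simp; linarith)
  next
    case False
    show ?thesis
    proof (cases "t = s + 3")
      case True
      have b0: "sum F {..<u} = F s" using True u Fz by (simp add: sum.neutral)
      have b1: "F s \<le> F t" using pair_le[of s 3] pc[of s 3] True tM by simp
      have t8': "8 \<le> t" using t8 True by simp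
      have a0: "F (t-1) * (7/8) \<le> F t" using rc[of 0 8] t8' by simp
      have a1: "F t * (6/9) \<le> F (t+1)" using rc[of 1 8] t8' by simp
      show ?thesis using b0 b1 lo Fu tt up2 Fnn[of t] a0 a1 by (simp; linarith)
    next
      case False2: False
      then have t94: "s + 4 \<le> t" using False by simp
      then have t9': "9 \<le> t" using t9 by simp
      have "sum F {..<u} = sum F {s..<u}"
      proof -
        have "{..<u} = {..<s} \<union> {s..<u}" using t94 u by auto
        then have "sum F {..<u} = sum F {..<s} + sum F {s..<u}" by (simp add: sum.union_disjoint ivl_disj_int)
        moreover have "sum F {..<s} = 0" using Fz by simp
        ultimately show ?thesis by simp
      qed
      also have "\<dots> \<le> (\<Sum>k\<in>{s..<u}. F (2*u+1-k))"
      proof (rule sum_mono)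
        fix k assume k: "k \<in> {s..<u}"
        have "F k \<le> F (k + (2*u+1-2*k))"
          using pair_le[of k "2*u+1-2*k"] pc[of k "2*u+1-2*k"] k u t2M by auto
        also have "k + (2*u+1-2*k) = 2*u+1-k" using k by auto
        finally show "F k \<le> F (2*u+1-k)" .
      qed
      also have "\<dots> = sum F ((\<lambda>k. 2*u+1-k) ` {s..<u})"
        by (rule sum.reindex[symmetric, unfolded comp_def]) (auto simp: inj_on_def)
      also have "\<dots> \<le> sum F {t..M}"
        using u t2M by (intro sum_mono2) (auto simp: Fnn)
      finally have sl: "sum F {..<u} \<le> sum F {t..M}" .
      have c0: "F (t-1) * (8/9) \<le> F t" using rc[of 0 9] t9' by simp
      have c1: "F t * (7/10) \<le> F (t+1)" using rc[of 1 9] t9' by simp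
      have c2: "F (t+1) * (6/11) \<le> F (t+2)" using rc[of 2 9] t9' by (simp add: add.commute)
      have c3: "F (t+2) * (5/12) \<le> F (t+3)" using rc[of 3 9] t9' by (simp add: add.commute)
      have c4: "F (t+3) * (4/13) \<le> F (t+4)" using rc[of 4 9] t9' by (simp add: add.commute)
      have c5: "F (t+4) * (3/14) \<le> F (t+5)" using rc[of 5 9] t9' by (simp add: add.commute)
      have "(\<Sum>j<6. F (t+j)) = F t + F (t+1) + F (t+2) + F (t+3) + F (t+4) + F (t+5)"
        by (simp add: numeral_eq_Suc add.commute)
      then show ?thesis using lo Fu tt up6 sl c0 c1 c2 c3 c4 c5 Fnn[of "t-1"] by linarith
    qed
  qed
qed

end


lemma event_sum:
  "gnp_event N p ({S. Q (card S)} \<inter> {S. connected_graph N S}) =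
   (\<Sum>k\<le>card (all_edges N). if Q k then real (card (Ck N k)) * (p^k * (1-p)^(card (all_edges N) - k)) else 0)"
proof -
  define E where "E = all_edges N"
  define X where "X = {S. Q (card S)} \<inter> {S. connected_graph N S} \<inter> graphs N"
  have fX: "finite X" unfolding X_def graphs_def
    by (rule finite_subset[of _ "Pow (all_edges N)"]) (auto simp: finite_all_edges)
  have img: "card ` X \<subseteq> {..card E}"
    unfolding X_def graphs_def E_def using finite_all_edges by (auto intro: card_mono)
  have "gnp_event N p ({S. Q (card S)} \<inter> {S. connected_graph N S}) = sum (gnp_prob N p) X"
    unfolding gnp_event_def X_def by simp
  also have "\<dots> = (\<Sum>k\<le>card E. sum (gnp_prob N p) {S \<in> X. card S = k})"
    using sum.group[OF fX _ img, of "gnp_prob N p"] by simp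
  also have "\<dots> = (\<Sum>k\<le>card E. if Q k then real (card (Ck N k)) * (p^k * (1-p)^(card E - k)) else 0)"
  proof (rule sum.cong)
    fix k assume "k \<in> {..card E}"
    have eq: "{S \<in> X. card S = k} = (if Q k then Ck N k else {})"
      unfolding X_def Ck_def graphs_def by auto
    show "sum (gnp_prob N p) {S \<in> X. card S = k} = (if Q k then real (card (Ck N k)) * (p^k * (1-p)^(card E - k)) else 0)"
    proof (cases "Q k")
      case True
      have "sum (gnp_prob N p) (Ck N k) = sum (\<lambda>S. p^k * (1-p)^(card E - k)) (Ck N k)"
        by (rule sum.cong) (auto simp: Ck_def gnp_prob_def E_def)
      then show ?thesis using eq True by simp
    next
      case False then show ?thesis by (subst eq) simp
    qed
  qed simp
  finally show ?thesis unfolding E_def .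
qed

theorem mainTheorem11:
  fixes N :: nat and p :: real
  assumes "0 < p" and "p \<le> 1/2"
  shows "gnp_cond N p {S. real (card S) \<ge> p * real (N choose 2)}
                      {S. connected_graph N S} \<ge> 1/3"
proof -
  note p0 = assms(1) and ph = assms(2)
  define M where "M = card (all_edges N)"
  have hM: "M = N choose 2" unfolding M_def by (rule card_all_edges)
  define F where "F k = real (card (Ck N k)) * (p^k * (1-p)^(M - k))" for k
  define x where "x = p * real M"
  define t where "t = nat \<lceil>x\<rceil>"
  have x0: "0 \<le> x" unfolding x_def using p0 by simp
  have "p * real M \<le> (1/2) * real M" using ph by (intro mult_right_mono) auto
  then have xM: "2 * x \<le> real M" unfolding x_def by linarith
  have tk: "x \<le> real k \<longleftrightarrow> t \<le> k" for k
    unfolding t_def using x0 by (simp add: nat_le_iff ceiling_le_iff)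
  have tx: "real t - 1 < x" unfolding t_def using x0 ceiling_correct[of x] by linarith
  have Fnn: "0 \<le> F k" for k unfolding F_def using p0 ph by simp
  have xe: "p * real (N choose 2) = x" unfolding x_def hM by simp
  have num: "gnp_event N p ({S. real (card S) \<ge> p * real (N choose 2)} \<inter> {S. connected_graph N S})
      = sum F {t..M}"
  proof -
    note inst = event_sum[where Q="\<lambda>k. p * real (N choose 2) \<le> real k" and N=N and p=p]
    have "gnp_event N p ({S. real (card S) \<ge> p * real (N choose 2)} \<inter> {S. connected_graph N S})
      = (\<Sum>k\<le>M. if x \<le> real k then F k else 0)"
      using inst unfolding M_def[symmetric] F_def[symmetric] xe .
    also have "\<dots> = sum F {k \<in> {..M}. x \<le> real k}"
      using sum.inter_filter[where A="{..M}" and g=F and P="\<lambda>k. x \<le> real k"] by simp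
    also have "{k \<in> {..M}. x \<le> real k} = {t..M}"
    proof (rule set_eqI)
      fix k show "k \<in> {k \<in> {..M}. x \<le> real k} \<longleftrightarrow> k \<in> {t..M}" using tk[of k] by (simp add: conj_commute)
    qed
    finally show ?thesis .
  qed
  have den: "gnp_event N p {S. connected_graph N S} = sum F {..M}"
  proof -
    note inst = event_sum[where Q="\<lambda>k. True" and N=N and p=p]
    have eqs: "{S. True} \<inter> {S. connected_graph N S} = {S. connected_graph N S}" by blast
    have "gnp_event N p {S. connected_graph N S} = (\<Sum>k\<le>M. if True then F k else 0)"
      using inst unfolding M_def[symmetric] F_def[symmetric] eqs .
    then show ?thesis by simp
  qed
  have FM: "0 < F M"
  proof -
    have "card (Ck N M) \<noteq> 0" using Ck_full[of N] finite_Ck[of N M] unfolding M_def by auto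
    then show ?thesis unfolding F_def using p0 by simp
  qed
  have totpos: "0 < sum F {..M}"
  proof -
    have "F M \<le> sum F {..M}" using Fnn by (intro member_le_sum) auto
    then show ?thesis using FM by simp
  qed
  have cond: "gnp_cond N p {S. real (card S) \<ge> p * real (N choose 2)} {S. connected_graph N S}
     = sum F {t..M} / sum F {..M}"
    unfolding gnp_cond_def using num den by simp
  have Fz: "F k = 0" if "k < N - 1" for k unfolding F_def using Ck_small[OF that] by simp
  have t2M: "2 * t \<le> M + 1"
  proof -
    have "2 * real t < real M + 2" using tx xM by linarith
    then show ?thesis by linarith
  qed
  have tM1: "t \<le> M + 1" using t2M by simp
  have split: "sum F {..M} = sum F {..<t} + sum F {t..M}"
  proof -
    have "{..M} = {..<t} \<union> {t..M}" using tM1 by auto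
    then show ?thesis by (simp add: sum.union_disjoint ivl_disj_int)
  qed
  show ?thesis
  proof (cases "t \<le> N - 1")
    case True
    have "sum F {..<t} = 0" using Fz True by (intro sum.neutral) auto
    then show ?thesis using cond split totpos by simp
  next
    case False
    then have tN: "N \<le> t" "N - 1 < t" by auto
    have N5: "5 \<le> N"
    proof (rule ccontr)
      assume "\<not> 5 \<le> N"
      then have "N = 0 \<or> N = 1 \<or> N = 2 \<or> N = 3 \<or> N = 4" by linarith
      then have "M + 1 < 2 * t"
      proof (elim disjE)
        assume "N = 0" then show ?thesis using hM tN by (simp add: choose_two)
      next
        assume "N = 1" then show ?thesis using hM tN by (simp add: choose_two)
      next
        assume "N = 2" then show ?thesis using hM tN by (simp add: choose_two)
      next
        assume "N = 3" then show ?thesis using hM tN by (simp add: choose_two)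
      next
        assume "N = 4" then show ?thesis using hM tN by (simp add: choose_two)
      qed
      then show False using t2M by simp
    qed
    have N6: "6 \<le> N" if "N + 2 \<le> t"
    proof (rule ccontr)
      assume "\<not> 6 \<le> N"
      then have "N = 5" using N5 by simp
      then have "M = 10" using hM by (simp add: choose_two)
      then show False using t2M that \<open>N = 5\<close> by simp
    qed
    have M10: "10 \<le> M"
    proof -
      have "5 * 4 \<le> N * (N - 1)" using N5 by (intro mult_le_mono) auto
      then have "20 div 2 \<le> N * (N - 1) div 2" by (intro div_le_mono) simp
      then show ?thesis using hM by (simp add: choose_two)
    qed
    have tM: "t + 5 \<le> M" using t2M M10 by linarith
    have rat: "F k * (real (M - k) * p) \<le> F (Suc k) * (real (Suc k) * (1 - p))" if k: "k < M" for k
    proof -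
      have c0: "card (Ck N k) * (M - k) \<le> card (Ck N (Suc k)) * Suc k"
        using Ck_mono[of k N] k unfolding M_def by simp
      have c: "real (card (Ck N k)) * real (M - k) \<le> real (card (Ck N (Suc k))) * real (Suc k)"
        using c0 by (metis of_nat_le_iff of_nat_mult)
      have pos: "0 \<le> p^(Suc k) * (1-p)^(M-k)" using p0 ph by simp
      have e1: "F k * (real (M - k) * p) = (real (card (Ck N k)) * real (M - k)) * (p^(Suc k) * (1-p)^(M-k))"
        unfolding F_def by (simp add: mult_ac)
      have pw: "(1-p)^(M - k) = (1-p)^(M - Suc k) * (1-p)" using k
        by (metis Suc_diff_Suc power_Suc2)
      have e2: "F (Suc k) * (real (Suc k) * (1 - p)) = (real (card (Ck N (Suc k))) * real (Suc k)) * (p^(Suc k) * (1-p)^(M-k))"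
        unfolding F_def pw by (simp only: mult_ac)
      show ?thesis unfolding e1 e2 using mult_right_mono[OF c pos] .
    qed
    have main: "sum F {..<t} \<le> 2 * sum F {t..M}"
    proof (rule main_ineq[where s = "N - 1"])
      show "0 < p" "p \<le> 1/2" by (fact p0, fact ph)
      show "\<And>k. 0 \<le> F k" by (fact Fnn)
      show "\<And>k. k < M \<Longrightarrow> F k * (real (M - k) * p) \<le> F (Suc k) * (real (Suc k) * (1 - p))" by (fact rat)
      show "\<And>k. k < N - 1 \<Longrightarrow> F k = 0" by (fact Fz)
      show "real t - 1 < real M * p" using tx unfolding x_def by (simp add: mult.commute)
      show "N - 1 < t" by (fact tN(2))
      show "5 \<le> t" using N5 tN by simp
      show "N - 1 + 3 \<le> t \<Longrightarrow> 8 \<le> t" using N6 N5 by simp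
      show "N - 1 + 4 \<le> t \<Longrightarrow> 9 \<le> t" using N6 N5 by simp
      show "t + 5 \<le> M" by (fact tM)
      show "2 * t \<le> M + 1" by (fact t2M)
    qed
    have "1/3 \<le> sum F {t..M} / sum F {..M}"
      using main split totpos by (simp add: divide_simps)
    then show ?thesis using cond by simp
  qed
qed


end
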